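(* Let $G$ be a finite simple graph, and let $V_0 \subseteq V(G)$ be reducible using $\mathcal{S}$ and $X$. Let $G' = (G - X) - V_0$. If $\tau(G') \leq 2\nu(G')$, then $\tau(G) \leq 2\nu(G)$.
   Context: $\nu(G)$ is the maximum number of pairwise edge-disjoint triangles in $G$; $\tau(G)$ is the minimum size of an edge set $Y$ with $G-Y$ triangle-free. For a set $\mathcal{S}$ of triangles, an $\mathcal{S}$-edge is an edge of some triangle in $\mathcal{S}$. A nonempty set $V_0 \subseteq V(G)$ is reducible using $\mathcal{S}$ and $X$, where $\mathcal{S}$ is a set of pairwise edge-disjoint triangles of $G$ and $X \subseteq E(G)$, if (i) $|X| \leq 2|\mathcal{S}|$; (ii) $G - X$ has no triangle containing a vertex of $V_0$; and (iii) $X$ contains every $\mathcal{S}$-edge whose endpoints both lie outside $V_0$. *)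

theory Defs
  imports Main
begin

definition simple_graph :: "'a set \<Rightarrow> 'a set set \<Rightarrow> bool" where
  "simple_graph V E \<longleftrightarrow> finite V \<and> (\<forall>e\<in>E. e \<subseteq> V \<and> card e = 2)"

definition triangles :: "'a set set \<Rightarrow> 'a set set" where
  "triangles E = {T. card T = 3 \<and> (\<forall>x\<in>T. \<forall>y\<in>T. x \<noteq> y \<longrightarrow> {x, y} \<in> E)}"

definition tri_edges :: "'a set \<Rightarrow> 'a set set" where
  "tri_edges T = {e. e \<subseteq> T \<and> card e = 2}"

definition S_edges :: "'a set set \<Rightarrow> 'a set set" where
  "S_edges S = (\<Union>T\<in>S. tri_edges T)"

definition tri_packing :: "'a set set \<Rightarrow> 'a set set \<Rightarrow> bool" where
  "tri_packing E S \<longleftrightarrow> S \<subseteq> triangles E \<and>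
     (\<forall>T\<in>S. \<forall>T'\<in>S. T \<noteq> T' \<longrightarrow> tri_edges T \<inter> tri_edges T' = {})"

definition nu :: "'a set set \<Rightarrow> nat" where
  "nu E = Max {card S | S. tri_packing E S}"

definition tau :: "'a set set \<Rightarrow> nat" where
  "tau E = Min {card Y | Y. Y \<subseteq> E \<and> triangles (E - Y) = {}}"

definition del_vertices_E :: "'a set set \<Rightarrow> 'a set \<Rightarrow> 'a set set" where
  "del_vertices_E E W = {e \<in> E. e \<inter> W = {}}"

definition reducible :: "'a set \<Rightarrow> 'a set set \<Rightarrow> 'a set \<Rightarrow> 'a set set \<Rightarrow> 'a set set \<Rightarrow> bool" where
  "reducible V E V0 S X \<longleftrightarrow>
     V0 \<noteq> {} \<and> V0 \<subseteq> V \<and> tri_packing E S \<and> X \<subseteq> E \<and>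
     card X \<le> 2 * card S \<and>
     (\<forall>T\<in>triangles (E - X). T \<inter> V0 = {}) \<and>
     (\<forall>e\<in>S_edges S. e \<inter> V0 = {} \<longrightarrow> e \<in> X)"

end

theory Submission
  imports Defs
begin

lemma tri_sub_V:
  assumes sg: "simple_graph V E" and T: "T \<in> triangles E"
  shows "T \<subseteq> V"
proof
  fix x assume x: "x \<in> T"
  have c: "card T = 3" using T by (simp add: triangles_def)
  have "\<exists>y\<in>T. y \<noteq> x"
  proof (rule ccontr)
    assume "\<not> ?thesis"
    hence "T \<subseteq> {x}" by auto
    hence "card T \<le> 1" using card_mono[of "{x}" T] by simp
    with c show False by simp
  qed
  then obtain y where y: "y \<in> T" "y \<noteq> x" by blast
  have "{x,y} \<in> E" using T x y by (auto simp: triangles_def)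
  thus "x \<in> V" using sg by (auto simp: simple_graph_def)
qed

lemma finE: "simple_graph V E \<Longrightarrow> finite E"
  unfolding simple_graph_def by (metis PowI finite_Pow_iff finite_subset subsetI)

lemma fin_tris: "simple_graph V E \<Longrightarrow> finite (triangles E)"
proof -
  assume sg: "simple_graph V E"
  have "triangles E \<subseteq> Pow V" using tri_sub_V[OF sg] by blast
  thus ?thesis using sg by (metis finite_Pow_iff finite_subset simple_graph_def)
qed

lemma tri_edges_ne: "card T = 3 \<Longrightarrow> tri_edges T \<noteq> {}"
proof -
  assume "card T = 3"
  then obtain a b c where "T = {a,b,c}" "a \<noteq> b" by (metis card_3_iff)
  hence "{a,b} \<in> tri_edges T" by (auto simp: tri_edges_def)
  thus ?thesis by auto
qed

lemma tri_edges_in: "T \<in> triangles E \<Longrightarrow> tri_edges T \<subseteq> E"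
proof
  fix e assume T: "T \<in> triangles E" and e: "e \<in> tri_edges T"
  then obtain x y where "e = {x,y}" "x \<noteq> y" by (auto simp: tri_edges_def card_2_iff)
  with T e show "e \<in> E" by (auto simp: tri_edges_def triangles_def)
qed

lemma tri_of_edges: "card T = 3 \<Longrightarrow> tri_edges T \<subseteq> E \<Longrightarrow> T \<in> triangles E"
  unfolding triangles_def tri_edges_def
proof (intro CollectI conjI ballI impI)
  fix x y assume "card T = 3" "{e. e \<subseteq> T \<and> card e = 2} \<subseteq> E" "x \<in> T" "y \<in> T" "x \<noteq> y"
  thus "{x, y} \<in> E" by (simp add: subset_iff)
qed

theorem lemma2p2:
  fixes V V0 :: "'a set" and E S X :: "'a set set"
  assumes "simple_graph V E"
    and "reducible V E V0 S X"
    and "tau (del_vertices_E (E - X) V0) \<le> 2 * nu (del_vertices_E (E - X) V0)"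
  shows "tau E \<le> 2 * nu E"
proof -
  note sg = assms(1)
  define E' where "E' = del_vertices_E (E - X) V0"
  have E'sub: "E' \<subseteq> E" by (auto simp: E'_def del_vertices_E_def)
  have sg': "simple_graph V E'" using sg E'sub by (auto simp: simple_graph_def)
  have finE: "finite E" using finE[OF sg] .
  have finE': "finite E'" using finE E'sub finite_subset by blast
  have red: "V0 \<noteq> {}" "V0 \<subseteq> V" "tri_packing E S" "X \<subseteq> E" "card X \<le> 2 * card S"
    "\<forall>T\<in>triangles (E - X). T \<inter> V0 = {}" "\<forall>e\<in>S_edges S. e \<inter> V0 = {} \<longrightarrow> e \<in> X"
    using assms(2) unfolding reducible_def by auto
  have "tau E' \<in> {card Y | Y. Y \<subseteq> E' \<and> triangles (E' - Y) = {}}"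
    unfolding tau_def
  proof (rule Min_in)
    show "finite {card Y | Y. Y \<subseteq> E' \<and> triangles (E' - Y) = {}}"
      using finE' by (simp add: finite_image_set2 )
  next
    have "triangles (E' - E') = {}" by (auto simp: triangles_def card_3_iff)
    thus "{card Y | Y. Y \<subseteq> E' \<and> triangles (E' - Y) = {}} \<noteq> {}" by blast
  qed
  then obtain Y' where Y': "Y' \<subseteq> E'" "triangles (E' - Y') = {}" "card Y' = tau E'" by auto
  have finP: "finite {card P | P. tri_packing E' P}"
  proof (rule finite_subset)
    show "{card P | P. tri_packing E' P} \<subseteq> {..card (triangles E')}"
      using fin_tris[OF sg'] by (auto simp: tri_packing_def intro: card_mono)
  qed simp
  have "nu E' \<in> {card P | P. tri_packing E' P}"
    unfolding nu_def
  proof (rule Max_in[OF finP])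
    have "tri_packing E' {}" by (simp add: tri_packing_def)
    thus "{card P | P. tri_packing E' P} \<noteq> {}" by blast
  qed
  then obtain P where P: "tri_packing E' P" "card P = nu E'" by auto
  have finX: "finite X" using red(4) finE finite_subset by blast
  have finY': "finite Y'" using Y'(1) finE' finite_subset by blast
  have cov: "triangles (E - (X \<union> Y')) = {}"
  proof (rule ccontr)
    assume "triangles (E - (X \<union> Y')) \<noteq> {}"
    then obtain T where T: "T \<in> triangles (E - (X \<union> Y'))" by blast
    have c: "card T = 3" using T by (simp add: triangles_def)
    have "T \<in> triangles (E - X)" using T by (auto simp: triangles_def)
    hence d: "T \<inter> V0 = {}" using red(6) by blast
    have "tri_edges T \<subseteq> E' - Y'"
    proof
      fix e assume e: "e \<in> tri_edges T"
      hence "e \<in> E - (X \<union> Y')" using tri_edges_in[OF T] by blast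
      moreover have "e \<inter> V0 = {}" using e d by (auto simp: tri_edges_def)
      ultimately show "e \<in> E' - Y'" by (auto simp: E'_def del_vertices_E_def)
    qed
    hence "T \<in> triangles (E' - Y')" using tri_of_edges c by blast
    with Y'(2) show False by blast
  qed
  have tauE: "tau E \<le> card (X \<union> Y')"
    unfolding tau_def
  proof (rule Min_le)
    show "finite {card Y | Y. Y \<subseteq> E \<and> triangles (E - Y) = {}}"
      using finE by (simp add: finite_image_set2)
    show "card (X \<union> Y') \<in> {card Y | Y. Y \<subseteq> E \<and> triangles (E - Y) = {}}"
      proof (intro CollectI exI conjI)
      show "X \<union> Y' \<subseteq> E" using red(4) Y'(1) E'sub by blast
    qed (use cov in auto)
  qed
  have cXY: "card (X \<union> Y') \<le> card X + card Y'" by (rule card_Un_le)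
  have finS: "finite S" using red(3) fin_tris[OF sg] finite_subset by (auto simp: tri_packing_def)
  have finP': "finite P" using P(1) fin_tris[OF sg'] finite_subset by (auto simp: tri_packing_def)
  have Ptri: "\<And>T. T \<in> P \<Longrightarrow> T \<in> triangles E'" using P(1) by (auto simp: tri_packing_def)
  have Stri: "\<And>T. T \<in> S \<Longrightarrow> T \<in> triangles E" using red(3) by (auto simp: tri_packing_def)
  have disj: "\<And>T T'. T \<in> S \<Longrightarrow> T' \<in> P \<Longrightarrow> tri_edges T \<inter> tri_edges T' = {}"
  proof -
    fix T T' assume T: "T \<in> S" and T': "T' \<in> P"
    show "tri_edges T \<inter> tri_edges T' = {}"
    proof (rule ccontr)
      assume "tri_edges T \<inter> tri_edges T' \<noteq> {}"
      then obtain e where e: "e \<in> tri_edges T" "e \<in> tri_edges T'" by blast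
      have "e \<in> E'" using tri_edges_in[OF Ptri[OF T']] e(2) by blast
      hence "e \<inter> V0 = {}" "e \<notin> X" by (auto simp: E'_def del_vertices_E_def)
      moreover have "e \<in> S_edges S" using T e(1) by (auto simp: S_edges_def)
      ultimately show False using red(7) by blast
    qed
  qed
  have SP: "S \<inter> P = {}"
  proof (rule ccontr)
    assume "S \<inter> P \<noteq> {}"
    then obtain T where "T \<in> S" "T \<in> P" by blast
    moreover have "card T = 3" using \<open>T \<in> S\<close> Stri by (simp add: triangles_def)
    ultimately show False using disj tri_edges_ne by fastforce
  qed
  have pack: "tri_packing E (S \<union> P)"
    unfolding tri_packing_def
  proof (intro conjI ballI impI)
    show "S \<union> P \<subseteq> triangles E"
    proof
      fix T assume "T \<in> S \<union> P"
      thus "T \<in> triangles E"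
      proof
        assume "T \<in> P"
        hence "T \<in> triangles E'" by (rule Ptri)
        thus ?thesis using E'sub unfolding triangles_def by blast
      qed (rule Stri)
    qed
  next
    fix T T' assume "T \<in> S \<union> P" "T' \<in> S \<union> P" "T \<noteq> T'"
    thus "tri_edges T \<inter> tri_edges T' = {}"
    proof -
      have "T \<in> S \<and> T' \<in> S \<or> T \<in> P \<and> T' \<in> P \<or> T \<in> S \<and> T' \<in> P \<or> T \<in> P \<and> T' \<in> S"
        using \<open>T \<in> S \<union> P\<close> \<open>T' \<in> S \<union> P\<close> by blast
      thus ?thesis using red(3) P(1) disj[of T T'] disj[of T' T] \<open>T \<noteq> T'\<close>
        unfolding tri_packing_def by (metis inf_commute)
    qed
  qed
  have finPE: "finite {card Q | Q. tri_packing E Q}"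
  proof (rule finite_subset)
    show "{card Q | Q. tri_packing E Q} \<subseteq> {..card (triangles E)}"
      using fin_tris[OF sg] by (auto simp: tri_packing_def intro: card_mono)
  qed simp
  have "card (S \<union> P) \<le> nu E"
    unfolding nu_def by (rule Max_ge[OF finPE]) (use pack in auto)
  moreover have "card (S \<union> P) = card S + card P" using card_Un_disjoint[OF finS finP' SP] .
  ultimately show ?thesis
    using tauE cXY red(5) Y'(3) P(2) assms(3) unfolding E'_def[symmetric] by linarith
qed

end
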